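(* Let $g',g''\in G$ and let $(\xi''_i,\xi'_i)\in A_{g''}\times A_{g'}$, $i=1,2$, be composable pairs. Then $$\varpi_{g''g'}\big(\xi''_1*\xi'_1,\ \xi''_2*\xi'_2\big)=\varpi_{g''}(\xi''_1,\xi''_2)+\varpi_{g'}(\xi'_1,\xi'_2)-\lambda\big((X''_1,X'_1),(X''_2,X'_2)\big),$$ where $X''_i=\mathsf a(\xi''_i)\in T_{g''}G$, $X'_i=\mathsf a(\xi'_i)\in T_{g'}G$, and $\lambda=\tfrac12\,\mathrm{pr}_1^*\theta^L\cdot\mathrm{pr}_2^*\theta^R\in\Omega^2(G\times G)$ with $\mathrm{pr}_1(g'',g')=g''$, $\mathrm{pr}_2(g'',g')=g'$. That is, on $A^{[2]}$ one has $\mathrm{mult}_A^!\varpi=\mathrm{pr}_1^!\varpi+\mathrm{pr}_2^!\varpi-\lambda$.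
   Context: Let $G$ be a Lie group with Lie algebra $\mathfrak g$ carrying an $\mathrm{Ad}$-invariant symmetric bilinear form $\cdot$, $\theta^L=g^{-1}\mathrm dg$, $\theta^R=\mathrm dg\,g^{-1}$; for 1-forms $\alpha,\beta$ with values in $\mathfrak g$, $(\alpha\cdot\beta)(Y_1,Y_2)=\alpha(Y_1)\cdot\beta(Y_2)-\alpha(Y_2)\cdot\beta(Y_1)$. $A_g$ is the space of $\xi\in C^\infty(\mathbb R,\mathfrak g)$ with $\xi(t+1)=\mathrm{Ad}_g\xi(t)+v_\xi$ for a constant $v_\xi\in\mathfrak g$; the anchor $\mathsf a(\xi)\in T_gG$ is determined by $\theta^R(\mathsf a(\xi))=v_\xi$. The 2-form $\varpi$ on $A$ is $\varpi_g(\xi,\zeta)=\int_0^1\dot\xi\cdot\zeta\,dt-\mathrm{Ad}_g(\xi(0))\cdot v_\zeta-\tfrac12v_\xi\cdot v_\zeta$. A pair $(\xi'',\xi')\in A_{g''}\times A_{g'}$ is composable if $\xi'(1)=\xi''(0)$ and the concatenation $\xi''*\xi'$ is smooth, where $(\xi''*\xi')(t)=\xi'(2t)$ for $0\le t\le\tfrac12$, $=\xi''(2t-1)$ for $\tfrac12\le t\le1$, extended to all $t$ by $(\xi''*\xi')(t+1)=\mathrm{Ad}_{g''g'}(\xi''*\xi')(t)+\mathrm{Ad}_{g''}v_{\xi'}+v_{\xi''}$; then $\xi''*\xi'\in A_{g''g'}$. $A^{[2]}\subset A\times A$ is the bundle of composable pairs and $\mathrm{mult}_A(\xi'',\xi')=\xi''*\xi'$.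 *)

theory Defs
  imports "HOL-Analysis.Analysis" "HOL-Algebra.Group"
begin

text \<open>Abstract model of the data of a Lie group G with Lie algebra 'v.
  G is a group (HOL-Algebra), Ad its adjoint action on the finite-dimensional
  real vector space 'v, B the invariant symmetric bilinear form.
  Tangent vectors X in T_g G are represented by their right trivialization
  theta^R(X) in 'v; then theta^L(X) = Ad (g^-1) (theta^R X).\<close>

definition smooth_curve :: "(real \<Rightarrow> 'v::real_normed_vector) \<Rightarrow> bool" where
  "smooth_curve f \<longleftrightarrow>
     (\<exists>D. D 0 = f \<and> (\<forall>k t. (D k has_vector_derivative D (Suc k) t) (at t)))"

definition vconst :: "('g \<Rightarrow> 'v \<Rightarrow> 'v) \<Rightarrow> 'g \<Rightarrow> (real \<Rightarrow> 'v) \<Rightarrow> 'v::real_vector" where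
  "vconst Ad g \<xi> = \<xi> 1 - Ad g (\<xi> 0)"

definition inA :: "('g \<Rightarrow> 'v \<Rightarrow> 'v) \<Rightarrow> 'g \<Rightarrow> (real \<Rightarrow> 'v::real_normed_vector) \<Rightarrow> bool" where
  "inA Ad g \<xi> \<longleftrightarrow> smooth_curve \<xi> \<and> (\<exists>v. \<forall>t. \<xi> (t + 1) = Ad g (\<xi> t) + v)"

text \<open>anchor, expressed through its right trivialization theta^R(a(xi)) = v_xi\<close>
definition anchorR :: "('g \<Rightarrow> 'v \<Rightarrow> 'v) \<Rightarrow> 'g \<Rightarrow> (real \<Rightarrow> 'v) \<Rightarrow> 'v::real_vector" where
  "anchorR Ad g \<xi> = vconst Ad g \<xi>"

definition varpi :: "('v \<Rightarrow> 'v \<Rightarrow> real) \<Rightarrow> ('g \<Rightarrow> 'v \<Rightarrow> 'v) \<Rightarrow> 'g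
     \<Rightarrow> (real \<Rightarrow> 'v::euclidean_space) \<Rightarrow> (real \<Rightarrow> 'v) \<Rightarrow> real" where
  "varpi B Ad g \<xi> \<zeta> =
     integral {0..1} (\<lambda>t. B (vector_derivative \<xi> (at t)) (\<zeta> t))
     - B (Ad g (\<xi> 0)) (vconst Ad g \<zeta>)
     - 1/2 * B (vconst Ad g \<xi>) (vconst Ad g \<zeta>)"

definition is_concat :: "('g, 'b) monoid_scheme \<Rightarrow> ('g \<Rightarrow> 'v \<Rightarrow> 'v) \<Rightarrow> 'g \<Rightarrow> 'g
     \<Rightarrow> (real \<Rightarrow> 'v::real_vector) \<Rightarrow> (real \<Rightarrow> 'v) \<Rightarrow> (real \<Rightarrow> 'v) \<Rightarrow> bool" where
  "is_concat G Ad g2 g1 \<xi>2 \<xi>1 \<zeta> \<longleftrightarrow>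
     (\<forall>t\<in>{0..1/2}. \<zeta> t = \<xi>1 (2 * t)) \<and>
     (\<forall>t\<in>{1/2..1}. \<zeta> t = \<xi>2 (2 * t - 1)) \<and>
     (\<forall>t. \<zeta> (t + 1) = Ad (g2 \<otimes>\<^bsub>G\<^esub> g1) (\<zeta> t) + Ad g2 (vconst Ad g1 \<xi>1) + vconst Ad g2 \<xi>2)"

definition concat :: "('g, 'b) monoid_scheme \<Rightarrow> ('g \<Rightarrow> 'v \<Rightarrow> 'v) \<Rightarrow> 'g \<Rightarrow> 'g
     \<Rightarrow> (real \<Rightarrow> 'v::real_vector) \<Rightarrow> (real \<Rightarrow> 'v) \<Rightarrow> (real \<Rightarrow> 'v)" where
  "concat G Ad g2 g1 \<xi>2 \<xi>1 = (THE \<zeta>. is_concat G Ad g2 g1 \<xi>2 \<xi>1 \<zeta>)"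

definition composable :: "('g, 'b) monoid_scheme \<Rightarrow> ('g \<Rightarrow> 'v \<Rightarrow> 'v) \<Rightarrow> 'g \<Rightarrow> 'g
     \<Rightarrow> (real \<Rightarrow> 'v::real_normed_vector) \<Rightarrow> (real \<Rightarrow> 'v) \<Rightarrow> bool" where
  "composable G Ad g2 g1 \<xi>2 \<xi>1 \<longleftrightarrow>
     inA Ad g2 \<xi>2 \<and> inA Ad g1 \<xi>1 \<and> \<xi>1 1 = \<xi>2 0 \<and>
     smooth_curve (concat G Ad g2 g1 \<xi>2 \<xi>1)"

definition thetaL :: "('g, 'b) monoid_scheme \<Rightarrow> ('g \<Rightarrow> 'v \<Rightarrow> 'v) \<Rightarrow> 'g \<Rightarrow> 'v \<Rightarrow> 'v" where
  "thetaL G Ad g XR = Ad (inv\<^bsub>G\<^esub> g) XR"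

text \<open>lambda = 1/2 pr1^* theta^L . pr2^* theta^R at (g'',g'), evaluated on
  (X''1,X'1), (X''2,X'2) (tangent vectors given by right trivializations)\<close>
definition lam :: "('g, 'b) monoid_scheme \<Rightarrow> ('g \<Rightarrow> 'v \<Rightarrow> 'v) \<Rightarrow> ('v \<Rightarrow> 'v \<Rightarrow> real)
     \<Rightarrow> 'g \<Rightarrow> 'g \<Rightarrow> ('v \<times> 'v) \<Rightarrow> ('v \<times> 'v) \<Rightarrow> real" where
  "lam G Ad B g2 g1 Y1 Y2 =
     1/2 * (B (thetaL G Ad g2 (fst Y1)) (snd Y2) - B (thetaL G Ad g2 (fst Y2)) (snd Y1))"

end

theory Submission
  imports Defs
begin

lemma smooth_deriv:
  assumes "smooth_curve f"
  shows "(f has_vector_derivative vector_derivative f (at t)) (at t)"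
    and "continuous_on UNIV (\<lambda>t. vector_derivative f (at t))"
    and "continuous_on UNIV f"
proof -
  obtain D where D0: "D 0 = f" and D: "\<And>k t. (D k has_vector_derivative D (Suc k) t) (at t)"
    using assms unfolding smooth_curve_def by blast
  have d1: "(f has_vector_derivative D 1 t) (at t)" for t using D[of 0 t] D0 by simp
  hence vd: "vector_derivative f (at t) = D 1 t" for t by (simp add: vector_derivative_at)
  show "(f has_vector_derivative vector_derivative f (at t)) (at t)" using d1 vd by simp
  have "continuous_on UNIV (D 1)"
    using D[of 1] by (meson continuous_at_imp_continuous_on has_vector_derivative_continuous)
  thus "continuous_on UNIV (\<lambda>t. vector_derivative f (at t))" using vd by simp
  show "continuous_on UNIV f"
    using d1 by (meson continuous_at_imp_continuous_on has_vector_derivative_continuous)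
qed

lemma half_deriv:
  assumes "smooth_curve a" and "\<And>y. y \<in> S \<Longrightarrow> z y = a (2*y + c)" and "open S" and "t \<in> S"
  shows "vector_derivative z (at t) = 2 *\<^sub>R vector_derivative a (at (2*t+c))"
proof -
  have h1: "((\<lambda>y. 2*y + c) has_vector_derivative 2) (at t)"
    by (auto intro!: derivative_eq_intros)
  have "((a \<circ> (\<lambda>y. 2*y + c)) has_vector_derivative 2 *\<^sub>R vector_derivative a (at (2*t+c))) (at t)"
    by (rule vector_diff_chain_at[OF h1]) (use smooth_deriv(1)[OF assms(1)] in simp)
  hence "(z has_vector_derivative 2 *\<^sub>R vector_derivative a (at (2*t+c))) (at t)"
    by (rule has_vector_derivative_transform_within_open[OF _ assms(3,4)]) (simp add: assms(2))
  thus ?thesis by (rule vector_derivative_at)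
qed

lemma integ_half:
  fixes h :: "real \<Rightarrow> real"
  assumes "continuous_on UNIV h"
  shows "integral {-c/2..(1-c)/2} (\<lambda>t. 2 * h (2*t + c)) = integral {0..1} h"
proof -
  have "(h has_integral integral {0..1} h) (cbox 0 1)"
    using assms by (auto intro!: integrable_continuous_interval continuous_on_subset[OF assms])
  from has_integral_affinity'[OF this, of 2 c]
  have "((\<lambda>x. h (2*x + c)) has_integral integral {0..1} h / 2) {-c/2..(1-c)/2}"
    by simp
  from has_integral_mult_right[OF this, of 2] show ?thesis
    by (intro integral_unique) simp
qed

lemma bil_cont:
  fixes B :: "'v::euclidean_space \<Rightarrow> 'v \<Rightarrow> real"
  assumes "bilinear B" "continuous_on UNIV f" "continuous_on UNIV g"
  shows "continuous_on UNIV (\<lambda>t::real. B (f t) (g t))"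
  using assms(1) unfolding bilinear_conv_bounded_bilinear
  by (intro bounded_bilinear.continuous_on[of B] assms(2,3)) auto

lemma concat_int:
  fixes B :: "'v::euclidean_space \<Rightarrow> 'v \<Rightarrow> real"
  assumes bil: "bilinear B"
    and sa: "smooth_curve a" and sb: "smooth_curve b" and sc: "smooth_curve c" and sd: "smooth_curve d"
    and s1: "smooth_curve z1" and s2: "smooth_curve z2"
    and z1a: "\<And>t. t \<in> {0..1/2} \<Longrightarrow> z1 t = a (2*t)"
    and z1b: "\<And>t. t \<in> {1/2..1} \<Longrightarrow> z1 t = b (2*t-1)"
    and z2a: "\<And>t. t \<in> {0..1/2} \<Longrightarrow> z2 t = c (2*t)"
    and z2b: "\<And>t. t \<in> {1/2..1} \<Longrightarrow> z2 t = d (2*t-1)"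
  shows "integral {0..1} (\<lambda>t. B (vector_derivative z1 (at t)) (z2 t))
       = integral {0..1} (\<lambda>t. B (vector_derivative a (at t)) (c t))
       + integral {0..1} (\<lambda>t. B (vector_derivative b (at t)) (d t))"
proof -
  define F where "F t = B (vector_derivative z1 (at t)) (z2 t)" for t
  define H1 where "H1 t = B (vector_derivative a (at t)) (c t)" for t
  define H2 where "H2 t = B (vector_derivative b (at t)) (d t)" for t
  have cF: "continuous_on UNIV F" unfolding F_def
    by (rule bil_cont[OF bil smooth_deriv(2)[OF s1] smooth_deriv(3)[OF s2]])
  have cH1: "continuous_on UNIV H1" unfolding H1_def
    by (rule bil_cont[OF bil smooth_deriv(2)[OF sa] smooth_deriv(3)[OF sc]])
  have cH2: "continuous_on UNIV H2" unfolding H2_def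
    by (rule bil_cont[OF bil smooth_deriv(2)[OF sb] smooth_deriv(3)[OF sd]])
  have "F integrable_on {0..1}"
    by (rule integrable_continuous_interval, rule continuous_on_subset[OF cF]) auto
  hence split: "integral {0..1} F = integral {0..1/2} F + integral {1/2..1} F"
    by (simp add: Henstock_Kurzweil_Integration.integral_combine[of 0 "1/2" 1 F])
  have e1: "integral {0..1/2} F = integral {0..1/2} (\<lambda>t. 2 * H1 (2*t + 0))"
  proof (rule integral_spike[of "{0,1/2}"])
    show "negligible {0, 1/2::real}" by simp
    fix t :: real assume t: "t \<in> {0..1/2} - {0, 1/2}"
    hence t': "t \<in> {0<..<1/2}" by auto
    have "vector_derivative z1 (at t) = 2 *\<^sub>R vector_derivative a (at (2*t+0))"
      by (rule half_deriv[OF sa _ _ t']) (auto simp: z1a)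
    thus "2 * H1 (2*t + 0) = F t" using t' z2a[of t] bilinear_lmul[OF bil]
      by (simp add: F_def H1_def)
  qed
  have e2: "integral {1/2..1} F = integral {1/2..1} (\<lambda>t. 2 * H2 (2*t + -1))"
  proof (rule integral_spike[of "{1/2,1}"])
    show "negligible {1/2, 1::real}" by simp
    fix t :: real assume t: "t \<in> {1/2..1} - {1/2, 1}"
    hence t': "t \<in> {1/2<..<1}" by auto
    have "vector_derivative z1 (at t) = 2 *\<^sub>R vector_derivative b (at (2*t+ -1))"
      by (rule half_deriv[OF sb _ _ t']) (auto simp: z1b)
    thus "2 * H2 (2*t + -1) = F t" using t' z2b[of t] bilinear_lmul[OF bil]
      by (simp add: F_def H2_def)
  qed
  have i1: "integral {0..1/2} (\<lambda>t. 2 * H1 (2*t + 0)) = integral {0..1} H1"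
    using integ_half[OF cH1, of 0] by simp
  have i2: "integral {1/2..1} (\<lambda>t. 2 * H2 (2*t + -1)) = integral {0..1} H2"
    using integ_half[OF cH2, of "-1"] by simp
  show ?thesis using split e1 e2 i1 i2 unfolding F_def H1_def H2_def by simp
qed

lemma ext_unique:
  fixes z z' z0 :: "real \<Rightarrow> 'a"
  assumes TiT: "\<And>x. Ti (T x) = x"
    and z: "\<And>t. t \<in> {0..1} \<Longrightarrow> z t = z0 t" "\<And>t. z (t+1) = T (z t)"
    and z': "\<And>t. t \<in> {0..1} \<Longrightarrow> z' t = z0 t" "\<And>t. z' (t+1) = T (z' t)"
  shows "z = z'"
proof -
  have "\<forall>t::real. t \<in> {- real n..real n + 1} \<longrightarrow> z t = z' t" for n
  proof (induction n)
    case 0 then show ?case using z(1) z'(1) by auto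
  next
    case (Suc n)
    show ?case
    proof (intro allI impI)
      fix t :: real assume t: "t \<in> {- real (Suc n)..real (Suc n) + 1}"
      consider "t \<in> {- real n..real n + 1}" | "t > real n + 1" | "t < - real n" using t by force
      then show "z t = z' t"
      proof cases
        case 1 then show ?thesis using Suc by blast
      next
        case 2
        hence "t - 1 \<in> {- real n..real n + 1}" using t by auto
        hence "z (t - 1) = z' (t - 1)" using Suc by blast
        thus ?thesis using z(2)[of "t-1"] z'(2)[of "t-1"] by simp
      next
        case 3
        hence "t + 1 \<in> {- real n..real n + 1}" using t by auto
        hence "z (t + 1) = z' (t + 1)" using Suc by blast
        hence "T (z t) = T (z' t)" using z(2) z'(2) by simp
        thus ?thesis by (metis TiT)
      qed
    qed
  qed
  show ?thesis
  proof
    fix t :: real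
    obtain n :: nat where "real n \<ge> \<bar>t\<bar>" using real_arch_simple by blast
    hence "t \<in> {- real n..real n + 1}" by auto
    thus "z t = z' t" using \<open>\<forall>t. t \<in> {- real n..real n + 1} \<longrightarrow> z t = z' t\<close> by blast
  qed
qed

definition ipow :: "('a \<Rightarrow> 'a) \<Rightarrow> ('a \<Rightarrow> 'a) \<Rightarrow> int \<Rightarrow> 'a \<Rightarrow> 'a" where
  "ipow T Ti k = (if 0 \<le> k then T ^^ nat k else Ti ^^ nat (-k))"

lemma ipow_step:
  assumes TTi: "\<And>x. T (Ti x) = x"
  shows "ipow T Ti (k+1) x = T (ipow T Ti k x)"
proof (cases "0 \<le> k")
  case True
  hence "nat (k+1) = Suc (nat k)" by simp
  thus ?thesis using True by (simp add: ipow_def)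
next
  case False
  hence "nat (-k) = Suc (nat (-(k+1)))" by simp
  thus ?thesis using False TTi by (simp add: ipow_def)
qed

lemma ext_exists:
  fixes z0 :: "real \<Rightarrow> 'a"
  assumes TTi: "\<And>x. T (Ti x) = x"
    and z01: "z0 1 = T (z0 0)"
  shows "\<exists>z. (\<forall>t\<in>{0..1}. z t = z0 t) \<and> (\<forall>t. z (t+1) = T (z t))"
proof -
  define z where "z t = ipow T Ti \<lfloor>t\<rfloor> (z0 (t - \<lfloor>t\<rfloor>))" for t :: real
  have "z t = z0 t" if "t \<in> {0..1}" for t
  proof (cases "t = 1")
    case True thus ?thesis using z01 by (simp add: z_def ipow_def)
  next
    case False
    with that have "\<lfloor>t\<rfloor> = 0" by (auto intro!: floor_unique)
    thus ?thesis by (simp add: z_def ipow_def)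
  qed
  moreover have "z (t+1) = T (z t)" for t
    unfolding z_def using ipow_step[of T Ti, OF TTi] by simp
  ultimately show ?thesis by blast
qed

lemma concat_is:
  fixes G :: "('g, 'b) monoid_scheme" and Ad :: "'g \<Rightarrow> 'v::real_normed_vector \<Rightarrow> 'v"
  assumes grp: "group G"
    and Ad_lin: "\<And>g. g \<in> carrier G \<Longrightarrow> linear (Ad g)"
    and Ad_one: "Ad \<one>\<^bsub>G\<^esub> = id"
    and Ad_mult: "\<And>g h. g \<in> carrier G \<Longrightarrow> h \<in> carrier G \<Longrightarrow> Ad (g \<otimes>\<^bsub>G\<^esub> h) = Ad g \<circ> Ad h"
    and g1G: "g1 \<in> carrier G" and g2G: "g2 \<in> carrier G"
    and ab: "a 1 = b 0"
  shows "is_concat G Ad g2 g1 b a (concat G Ad g2 g1 b a)"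
proof -
  define g where "g = g2 \<otimes>\<^bsub>G\<^esub> g1"
  have gG: "g \<in> carrier G" unfolding g_def using grp g1G g2G by (simp add: group.is_monoid monoid.m_closed)
  have igG: "inv\<^bsub>G\<^esub> g \<in> carrier G" using grp gG by (simp add: group.inv_closed)
  have AAi: "Ad g (Ad (inv\<^bsub>G\<^esub> g) y) = y" for y
    using Ad_mult[OF gG igG] Ad_one grp gG by (metis comp_apply group.r_inv id_apply)
  have AiA: "Ad (inv\<^bsub>G\<^esub> g) (Ad g y) = y" for y
    using Ad_mult[OF igG gG] Ad_one grp gG by (metis comp_apply group.l_inv id_apply)
  define w where "w = Ad g2 (vconst Ad g1 a) + vconst Ad g2 b"
  define T where "T x = Ad g x + w" for x
  define Ti where "Ti x = Ad (inv\<^bsub>G\<^esub> g) (x - w)" for x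
  have TTi: "T (Ti x) = x" for x unfolding T_def Ti_def using AAi by simp
  have TiT: "Ti (T x) = x" for x unfolding T_def Ti_def using AiA by simp
  define z0 where "z0 t = (if t \<le> 1/2 then a (2*t) else b (2*t-1))" for t :: real
  have Ag: "Ad g = Ad g2 \<circ> Ad g1" unfolding g_def by (rule Ad_mult[OF g2G g1G])
  have "z0 1 = T (z0 0)"
    unfolding z0_def T_def w_def vconst_def Ag
    using linear_diff[OF Ad_lin[OF g2G]] ab by simp
  from ext_exists[of T Ti, OF TTi this] obtain z where
    z: "\<forall>t\<in>{0..1}. z t = z0 t" "\<forall>t. z (t+1) = T (z t)" by blast
  have isc_iff: "is_concat G Ad g2 g1 b a \<zeta> \<longleftrightarrow> (\<forall>t\<in>{0..1}. \<zeta> t = z0 t) \<and> (\<forall>t. \<zeta> (t+1) = T (\<zeta> t))" for \<zeta>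
  proof -
    have "(\<forall>t\<in>{0..1/2}. \<zeta> t = a (2 * t)) \<and> (\<forall>t\<in>{1/2..1}. \<zeta> t = b (2 * t - 1))
          \<longleftrightarrow> (\<forall>t\<in>{0..1}. \<zeta> t = z0 t)"
    proof
      assume h: "(\<forall>t\<in>{0..1/2}. \<zeta> t = a (2 * t)) \<and> (\<forall>t\<in>{1/2..1}. \<zeta> t = b (2 * t - 1))"
      show "\<forall>t\<in>{0..1}. \<zeta> t = z0 t"
      proof
        fix t :: real assume "t \<in> {0..1}"
        thus "\<zeta> t = z0 t" using h unfolding z0_def by (cases "t \<le> 1/2") auto
      qed
    next
      assume h: "\<forall>t\<in>{0..1}. \<zeta> t = z0 t"
      have "\<zeta> t = a (2 * t)" if "t \<in> {0..1/2}" for t using h that unfolding z0_def by auto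
      moreover have "\<zeta> t = b (2 * t - 1)" if t: "t \<in> {1/2..1}" for t
      proof (cases "t = 1/2")
        case True thus ?thesis using h ab unfolding z0_def by (simp add: mult.commute)
      next
        case False thus ?thesis using h t unfolding z0_def by auto
      qed
      ultimately show "(\<forall>t\<in>{0..1/2}. \<zeta> t = a (2 * t)) \<and> (\<forall>t\<in>{1/2..1}. \<zeta> t = b (2 * t - 1))" by blast
    qed
    thus ?thesis unfolding is_concat_def T_def w_def g_def by (simp only: add.assoc) blast
  qed
  have ex1: "\<exists>!\<zeta>. is_concat G Ad g2 g1 b a \<zeta>"
    unfolding isc_iff
  proof (rule ex1I[of _ z])
    show "(\<forall>t\<in>{0..1}. z t = z0 t) \<and> (\<forall>t. z (t + 1) = T (z t))" using z by blast
    fix y assume "(\<forall>t\<in>{0..1}. y t = z0 t) \<and> (\<forall>t. y (t + 1) = T (y t))"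
    thus "y = z" using ext_unique[of Ti T y z0 z] TiT z by auto
  qed
  show ?thesis unfolding concat_def by (rule theI'[OF ex1])
qed

theorem proposition6p1:
  fixes G :: "('g, 'b) monoid_scheme"
    and Ad :: "'g \<Rightarrow> 'v::euclidean_space \<Rightarrow> 'v"
    and B :: "'v \<Rightarrow> 'v \<Rightarrow> real"
    and g1 g2 :: 'g
    and \<xi>2\<^sub>1 \<xi>1\<^sub>1 \<xi>2\<^sub>2 \<xi>1\<^sub>2 :: "real \<Rightarrow> 'v"
  assumes grp: "group G"
    and Ad_lin: "\<And>g. g \<in> carrier G \<Longrightarrow> linear (Ad g)"
    and Ad_one: "Ad \<one>\<^bsub>G\<^esub> = id"
    and Ad_mult: "\<And>g h. g \<in> carrier G \<Longrightarrow> h \<in> carrier G \<Longrightarrow> Ad (g \<otimes>\<^bsub>G\<^esub> h) = Ad g \<circ> Ad h"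
    and B_bil: "bilinear B"
    and B_sym: "\<And>x y. B x y = B y x"
    and B_inv: "\<And>g x y. g \<in> carrier G \<Longrightarrow> B (Ad g x) (Ad g y) = B x y"
    and g1G: "g1 \<in> carrier G" and g2G: "g2 \<in> carrier G"
    and comp1: "composable G Ad g2 g1 \<xi>2\<^sub>1 \<xi>1\<^sub>1"
    and comp2: "composable G Ad g2 g1 \<xi>2\<^sub>2 \<xi>1\<^sub>2"
  shows "varpi B Ad (g2 \<otimes>\<^bsub>G\<^esub> g1)
            (concat G Ad g2 g1 \<xi>2\<^sub>1 \<xi>1\<^sub>1) (concat G Ad g2 g1 \<xi>2\<^sub>2 \<xi>1\<^sub>2)
         = varpi B Ad g2 \<xi>2\<^sub>1 \<xi>2\<^sub>2 + varpi B Ad g1 \<xi>1\<^sub>1 \<xi>1\<^sub>2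
           - lam G Ad B g2 g1
               (anchorR Ad g2 \<xi>2\<^sub>1, anchorR Ad g1 \<xi>1\<^sub>1)
               (anchorR Ad g2 \<xi>2\<^sub>2, anchorR Ad g1 \<xi>1\<^sub>2)"
proof -
  note cp1 = comp1[unfolded composable_def inA_def] and cp2 = comp2[unfolded composable_def inA_def]
  define z1 where "z1 = concat G Ad g2 g1 \<xi>2\<^sub>1 \<xi>1\<^sub>1"
  define z2 where "z2 = concat G Ad g2 g1 \<xi>2\<^sub>2 \<xi>1\<^sub>2"
  have ic1: "is_concat G Ad g2 g1 \<xi>2\<^sub>1 \<xi>1\<^sub>1 z1" unfolding z1_def
    by (rule concat_is[OF grp Ad_lin Ad_one Ad_mult g1G g2G]) (use cp1 in auto)
  have ic2: "is_concat G Ad g2 g1 \<xi>2\<^sub>2 \<xi>1\<^sub>2 z2" unfolding z2_def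
    by (rule concat_is[OF grp Ad_lin Ad_one Ad_mult g1G g2G]) (use cp2 in auto)
  note i1 = ic1[unfolded is_concat_def] and i2 = ic2[unfolded is_concat_def]
  have int: "integral {0..1} (\<lambda>t. B (vector_derivative z1 (at t)) (z2 t))
       = integral {0..1} (\<lambda>t. B (vector_derivative \<xi>1\<^sub>1 (at t)) (\<xi>1\<^sub>2 t))
       + integral {0..1} (\<lambda>t. B (vector_derivative \<xi>2\<^sub>1 (at t)) (\<xi>2\<^sub>2 t))"
    by (rule concat_int[OF B_bil]) (use cp1 cp2 i1 i2 z1_def z2_def in auto)
  have z10: "z1 0 = \<xi>1\<^sub>1 0" and z20: "z2 0 = \<xi>1\<^sub>2 0" using i1 i2 by auto
  have z11: "z1 1 = \<xi>2\<^sub>1 1" and z21: "z2 1 = \<xi>2\<^sub>2 1" using i1 i2 by auto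
  have m1: "\<xi>1\<^sub>1 1 = \<xi>2\<^sub>1 0" and m2: "\<xi>1\<^sub>2 1 = \<xi>2\<^sub>2 0" using cp1 cp2 by auto
  have igG: "inv\<^bsub>G\<^esub> g2 \<in> carrier G" using grp g2G by (simp add: group.inv_closed)
  have AAi: "Ad g2 (Ad (inv\<^bsub>G\<^esub> g2) y) = y" for y
    using Ad_mult[OF g2G igG] Ad_one grp g2G by (metis comp_apply group.r_inv id_apply)
  have Bi: "B (Ad (inv\<^bsub>G\<^esub> g2) x) y = B x (Ad g2 y)" for x y
    using B_inv[OF g2G, of "Ad (inv\<^bsub>G\<^esub> g2) x" y] AAi by simp
  have Ag: "Ad (g2 \<otimes>\<^bsub>G\<^esub> g1) = Ad g2 \<circ> Ad g1" by (rule Ad_mult[OF g2G g1G])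
  note L2 = linear_diff[OF Ad_lin[OF g2G]] and L1 = linear_diff[OF Ad_lin[OF g1G]]
  note BB = bilinear_lsub[OF B_bil] bilinear_rsub[OF B_bil] bilinear_ladd[OF B_bil] bilinear_radd[OF B_bil]
  show ?thesis
    unfolding z1_def[symmetric] z2_def[symmetric] varpi_def lam_def anchorR_def thetaL_def
    unfolding int Bi vconst_def Ag z10 z20 z11 z21 m1 m2
    by (simp add: L1 L2 BB B_inv[OF g1G] B_inv[OF g2G] algebra_simps B_sym)
qed

end
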